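(* Let $A\in\mathrm{Mat}(2,\mathbb{Z})$ have eigenvalues $a,b\in\mathbb{Z}$. Then $\mathrm{Per}(f_A)\supseteq\{1\}\cup P_a\cup P_b$.
   Context: $\mathbb{T}^2=\mathbb{R}^2/\mathbb{Z}^2$; for $A\in\mathrm{Mat}(2,\mathbb{Z})$, $f_A:\mathbb{T}^2\to\mathbb{T}^2$ is $x+\mathbb{Z}^2\mapsto Ax+\mathbb{Z}^2$. $\mathrm{Per}(f)$ is the set of $n\in\mathbb{N}=\{1,2,\dots\}$ such that $f$ has a periodic orbit of least period exactly $n$. For $a\in\mathbb{Z}\setminus\{0\}$, $P_a=\{\mathrm{ord}_n(a): n\ge 2,\ \gcd(a,n)=1\}$, where $\mathrm{ord}_n(a)$ is the least $k>0$ with $a^k\equiv1\pmod n$; by convention $P_0=\emptyset$. *)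

theory Defs
  imports "HOL-Analysis.Analysis" "HOL-Number_Theory.Number_Theory"
begin

text \<open>Points of the torus R^2/Z^2 are represented by vectors in R^2; two vectors
  represent the same torus point iff their difference lies in Z^2.\<close>
definition torus_eq :: "real^2 \<Rightarrow> real^2 \<Rightarrow> bool" where
  "torus_eq x y \<longleftrightarrow> (\<forall>i. (x - y) $ i \<in> \<int>)"

text \<open>The lift of f_A to R^2: x \<mapsto> A x (A an integer 2x2 matrix).
  It respects torus_eq, so it induces f_A on the torus.\<close>
definition linlift :: "int^2^2 \<Rightarrow> real^2 \<Rightarrow> real^2" where
  "linlift A x = (\<chi> i j. real_of_int (A $ i $ j)) *v x"

definition Per_torus :: "int^2^2 \<Rightarrow> nat set" where
  "Per_torus A = {n. n \<ge> 1 \<and> (\<exists>x. torus_eq ((linlift A ^^ n) x) x \<and>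
        (\<forall>k. 1 \<le> k \<and> k < n \<longrightarrow> \<not> torus_eq ((linlift A ^^ k) x) x))}"

definition ord_mod :: "nat \<Rightarrow> int \<Rightarrow> nat" where
  "ord_mod n a = (LEAST k. k > 0 \<and> [a ^ k = 1] (mod int n))"

definition P_set :: "int \<Rightarrow> nat set" where
  "P_set a = (if a = 0 then {} else
     {ord_mod n a | n. n \<ge> 2 \<and> coprime a (int n)})"

definition charpoly2 :: "int^2^2 \<Rightarrow> int poly" where
  "charpoly2 A = [:det A, - trace A, 1:]"

end

theory Submission imports Defs begin

lemma real_div_Ints_iff:
  fixes m :: int and n :: nat assumes "n > 0"
  shows "real_of_int m / real n \<in> \<int> \<longleftrightarrow> int n dvd m"
proof
  assume "real_of_int m / real n \<in> \<int>"
  then obtain z where z: "real_of_int m / real n = of_int z" by (auto elim: Ints_cases)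
  hence "real_of_int m = real n * of_int z" using assms by (simp add: field_simps)
  hence "m = int n * z" by (metis of_int_eq_iff of_int_mult of_int_of_nat_eq)
  thus "int n dvd m" by simp
next
  assume "int n dvd m" then obtain z where "m = int n * z" by auto
  thus "real_of_int m / real n \<in> \<int>" using assms by simp
qed

lemma dvd_coprime_pair:
  fixes c d u v :: int
  assumes "coprime u v" "d dvd c * u" "d dvd c * v"
  shows "d dvd c"
proof -
  have "d dvd gcd (c * u) (c * v)" using assms by simp
  also have "gcd (c * u) (c * v) = \<bar>c\<bar> * gcd u v" by (simp add: gcd_mult_left abs_mult)
  finally show ?thesis using assms(1) by simp
qed

lemma eigvec:
  fixes A :: "int^2^2" and a b :: int
  assumes "det A = a * b" "trace A = a + b"
  shows "\<exists>w::int^2. coprime (w$1) (w$2) \<and> (\<forall>i. A$i$1 * w$1 + A$i$2 * w$2 = a * w$i)"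
proof -
  define p where "p = A$1$1 - a"
  define q where "q = A$1$2"
  define r where "r = A$2$1"
  define s where "s = A$2$2 - a"
  have tr: "A$1$1 + A$2$2 = a + b" using assms(2) by (simp add: trace_def sum_2)
  have dt: "A$1$1 * A$2$2 - A$1$2 * A$2$1 = a * b" using assms(1) by (simp add: det_2)
  have ps: "p * s - q * r = 0"
  proof -
    have "p * s - q * r = (A$1$1 * A$2$2 - A$1$2 * A$2$1) - a * (A$1$1 + A$2$2) + a * a"
      by (simp add: p_def q_def r_def s_def algebra_simps)
    thus ?thesis using tr dt by (simp add: algebra_simps)
  qed
  have "\<exists>v1 v2. (v1 \<noteq> 0 \<or> v2 \<noteq> 0) \<and> p * v1 + q * v2 = 0 \<and> r * v1 + s * v2 = 0"
  proof (cases "p = 0 \<and> q = 0")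
    case False
    show ?thesis
      by (rule exI[of _ q], rule exI[of _ "-p"]) (use False ps in \<open>auto simp: algebra_simps\<close>)
  next
    case pq: True
    show ?thesis
    proof (cases "r = 0 \<and> s = 0")
      case True thus ?thesis using pq by (intro exI[of _ 1] exI[of _ 0]) auto
    next
      case False thus ?thesis using pq
        by (intro exI[of _ s] exI[of _ "-r"]) (auto simp: algebra_simps)
    qed
  qed
  then obtain v1 v2 where nz: "v1 \<noteq> 0 \<or> v2 \<noteq> 0" and e1: "p * v1 + q * v2 = 0" and e2: "r * v1 + s * v2 = 0"
    by blast
  define g where "g = gcd v1 v2"
  have g0: "g \<noteq> 0" using nz by (simp add: g_def)
  define w1 where "w1 = v1 div g"
  define w2 where "w2 = v2 div g"
  have v1: "v1 = g * w1" by (simp add: w1_def g_def)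
  have v2: "v2 = g * w2" by (simp add: w2_def g_def)
  have cop: "coprime w1 w2" unfolding w1_def w2_def g_def using nz by (intro div_gcd_coprime) auto
  have f1: "p * w1 + q * w2 = 0"
  proof -
    have "g * (p * w1 + q * w2) = 0" using e1 unfolding v1 v2 by (simp add: algebra_simps)
    thus ?thesis using g0 by simp
  qed
  have f2: "r * w1 + s * w2 = 0"
  proof -
    have "g * (r * w1 + s * w2) = 0" using e2 unfolding v1 v2 by (simp add: algebra_simps)
    thus ?thesis using g0 by simp
  qed
  define w :: "int^2" where "w = (\<chi> i. if i = 1 then w1 else w2)"
  have w1': "w$1 = w1" and w2': "w$2 = w2" by (simp_all add: w_def)
  show ?thesis
  proof (rule exI[of _ w], intro conjI allI)
    show "coprime (w$1) (w$2)" using cop w1' w2' by simp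
    fix i :: 2
    show "A$i$1 * w$1 + A$i$2 * w$2 = a * w$i"
      using f1 f2 exhaust_2[of i] unfolding w1' w2' p_def q_def r_def s_def
      by (auto simp: w1' w2' algebra_simps)
  qed
qed


lemma iter_lift:
  fixes A :: "int^2^2" and a :: int and w :: "int^2" and c :: real
  assumes ev: "\<forall>i. A$i$1 * w$1 + A$i$2 * w$2 = a * w$i"
  shows "(linlift A ^^ k) (\<chi> i. c * of_int (w$i)) = (\<chi> i. c * of_int (a^k * w$i))"
proof (induction k)
  case 0 show ?case by simp
next
  case (Suc k)
  have "linlift A (\<chi> i. c * of_int (a^k * w$i)) = (\<chi> i. c * of_int (a^Suc k * w$i))"
  proof -
    have "of_int (A$i$1) * (c * of_int (a^k * w$1)) + of_int (A$i$2) * (c * of_int (a^k * w$2))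
          = c * of_int (a^Suc k * w$i)" for i
    proof -
      have e0: "A$i$1 * w$1 + A$i$2 * w$2 = a * w$i" using ev by blast
      have e: "real_of_int (A$i$1 * w$1 + A$i$2 * w$2) = of_int (a * w$i)" unfolding e0 ..
      have "of_int (A$i$1) * (c * of_int (a^k * w$1)) + of_int (A$i$2) * (c * of_int (a^k * w$2))
          = c * of_int (a^k) * real_of_int (A$i$1 * w$1 + A$i$2 * w$2)"
        by (simp only: of_int_mult of_int_add) (simp add: algebra_simps)
      also have "\<dots> = c * of_int (a^Suc k * w$i)" unfolding e by (simp only: of_int_mult power_Suc) (simp add: algebra_simps)
      finally show ?thesis .
    qed
    thus ?thesis
      by (simp add: linlift_def vec_eq_iff matrix_vector_mult_def sum_2)
  qed
  thus ?case using Suc by simp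
qed

lemma P_sub:
  fixes A :: "int^2^2" and a b :: int
  assumes "det A = a * b" "trace A = a + b"
  shows "P_set a \<subseteq> Per_torus A"
proof
  fix m assume "m \<in> P_set a"
  then obtain n where a0: "a \<noteq> 0" and m: "m = ord_mod n a" and n2: "n \<ge> 2" and cop: "coprime a (int n)"
  proof -
    have a0: "a \<noteq> 0" using \<open>m \<in> P_set a\<close> unfolding P_set_def by (cases "a = 0") simp_all
    hence "m \<in> {ord_mod n a | n. n \<ge> 2 \<and> coprime a (int n)}" using \<open>m \<in> P_set a\<close> unfolding P_set_def by simp
    then obtain n where "m = ord_mod n a" "n \<ge> 2" "coprime a (int n)" by blast
    thus ?thesis using that a0 by blast
  qed
  obtain w :: "int^2" where cw: "coprime (w$1) (w$2)" and ev: "\<forall>i. A$i$1 * w$1 + A$i$2 * w$2 = a * w$i"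
    using eigvec[OF assms] by blast
  define x :: "real^2" where "x = (\<chi> i. (1 / real n) * of_int (w$i))"
  have np: "n > 0" using n2 by simp
  have key: "torus_eq ((linlift A ^^ k) x) x \<longleftrightarrow> [a ^ k = 1] (mod int n)" for k
  proof -
    have "torus_eq ((linlift A ^^ k) x) x \<longleftrightarrow>
          (\<forall>i. real_of_int ((a^k - 1) * w$i) / real n \<in> \<int>)"
      unfolding torus_eq_def x_def iter_lift[OF ev]
      by (simp add: algebra_simps diff_divide_distrib)
    also have "\<dots> \<longleftrightarrow> (\<forall>i. int n dvd (a^k - 1) * w$i)"
      by (simp only: real_div_Ints_iff[OF np])
    also have "\<dots> \<longleftrightarrow> int n dvd (a^k - 1)"
    proof
      assume h: "\<forall>i. int n dvd (a^k - 1) * w$i"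
      show "int n dvd (a^k - 1)" using dvd_coprime_pair[OF cw h[rule_format, of 1] h[rule_format, of 2]] .
    next
      assume "int n dvd (a^k - 1)"
      thus "\<forall>i. int n dvd (a^k - 1) * w$i" by simp
    qed
    also have "\<dots> \<longleftrightarrow> [a ^ k = 1] (mod int n)"
      by (rule cong_iff_dvd_diff[symmetric])
    finally show ?thesis .
  qed
  have ex: "\<exists>k. k > 0 \<and> [a ^ k = 1] (mod int n)"
  proof -
    have r: "residues (int n)" using n2 by (simp add: residues_def)
    have e: "[a ^ totient (nat (int n)) = 1] (mod int n)" using residues.euler_theorem[OF r cop] .
    have e2: "[a ^ totient n = 1] (mod int n)" using e by simp
    have t0: "totient n > 0" using np by simp
    show ?thesis by (rule exI[of _ "totient n"], rule conjI[OF t0 e2])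
  qed
  have mdef: "m = (LEAST k. k > 0 \<and> [a ^ k = 1] (mod int n))" using m by (simp add: ord_mod_def)
  have mp: "m > 0 \<and> [a ^ m = 1] (mod int n)" unfolding mdef using ex by (rule LeastI_ex)
  have mmin: "\<not> [a ^ k = 1] (mod int n)" if "1 \<le> k" "k < m" for k
  proof
    assume c: "[a ^ k = 1] (mod int n)"
    have "\<not> (k > 0 \<and> [a ^ k = 1] (mod int n))"
      using not_less_Least[of k "\<lambda>k. k > 0 \<and> [a ^ k = 1] (mod int n)"] that(2) unfolding mdef by blast
    thus False using c that(1) by simp
  qed
  show "m \<in> Per_torus A"
  proof -
    have "torus_eq ((linlift A ^^ m) x) x" using mp key by blast
    moreover have "\<forall>k. 1 \<le> k \<and> k < m \<longrightarrow> \<not> torus_eq ((linlift A ^^ k) x) x"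
      using mmin key by blast
    moreover have "m \<ge> 1" using mp by simp
    ultimately show ?thesis unfolding Per_torus_def by blast
  qed
qed

theorem proposition4:
  fixes A :: "int^2^2" and a b :: int
  assumes "charpoly2 A = [:-a, 1:] * [:-b, 1:]"
  shows "{1} \<union> P_set a \<union> P_set b \<subseteq> Per_torus A"
proof -
  have "[:det A, - trace A, 1:] = [:a * b, - (a + b), 1:]"
    using assms by (simp add: charpoly2_def algebra_simps)
  hence d: "det A = a * b" and t: "trace A = a + b" by auto
  have "1 \<in> Per_torus A"
    unfolding Per_torus_def torus_eq_def by (auto intro!: exI[of _ 0] simp: linlift_def)
  moreover have "P_set a \<subseteq> Per_torus A" using P_sub[OF d t] .
  moreover have "P_set b \<subseteq> Per_torus A" using P_sub[of A b a] d t by (simp add: algebra_simps)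
  ultimately show ?thesis by auto
qed

end
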